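(* Let $\mathfrak A:\mathbb{R}^n\to\mathbb{R}^n$, $\mathfrak B:(\mathbb{R}^n)^*\to\mathbb{R}^n$, $\mathfrak C:\mathbb{R}^n\to(\mathbb{R}^n)^*$ be linear maps with $\mathfrak B,\mathfrak C$ symmetric, such that $\mathfrak B$ is nonsingular and $\mathfrak B^{-1}\mathfrak A:\mathbb{R}^n\to(\mathbb{R}^n)^*$ is symmetric (i.e. $\mathfrak B^{-1}\mathfrak A=\mathfrak A^*\mathfrak B^{-1}$). Let $A=\mathfrak B\big(\mathfrak A^*\mathfrak B^{-1}\mathfrak A+\mathfrak C\big)$, an endomorphism of $\mathbb{R}^n$, and let $g=\mathfrak B^{-1}$, a nondegenerate symmetric bilinear form on $\mathbb{R}^n$. Then, for every $T>0$, the conjugate instants in $\left]0,T\right]$ and the Maslov index of the constant symplectic system \[\begin{pmatrix}v\\ \alpha\end{pmatrix}'=\begin{pmatrix}\mathfrak A&\mathfrak B\\ \mathfrak C&-\mathfrak A^*\end{pmatrix}\begin{pmatrix}v\\ \alpha\end{pmatrix}\] on $[0,T]$ coincide respectively with the conjugate instants in $\left]0,T\right]$ and the Maslov index $\mu(g,A,T)$ of the second-order system $v''=Av$ on $[0,T]$.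
   Context: $\mathfrak B$ symmetric means $\mathfrak B^*=\mathfrak B$ with $(\mathbb{R}^n)^{**}=\mathbb{R}^n$. On $\mathbb{R}^n\oplus(\mathbb{R}^n)^*$ use $\omega((v,\alpha),(w,\beta))=\beta(v)-\alpha(w)$ and $L_0=\{0\}\oplus(\mathbb{R}^n)^*$. For a constant symplectic system with coefficient matrix $Y$ and fundamental solution $\Phi(t)=\exp(tY)$, an instant $t_0\in\left]0,T\right]$ is conjugate if there is a nontrivial solution $(v,\alpha)$ with $v(0)=v(t_0)=0$, and its Maslov index on $[0,T]$ is $\mu_{L_0}(t\mapsto\Phi(t)(L_0))$. Here, for a continuous Lagrangian curve $\ell:[a,b]\to\Lambda$ admitting a Lagrangian $L_1$ transversal to $L_0$ and to all $\ell(t)$, $\mu_{L_0}(\ell)=\mathrm n_+(\varphi(\ell(b)))+\dim(\ell(b)\cap L_0)-\mathrm n_+(\varphi(\ell(a)))-\dim(\ell(a)\cap L_0)$ with $\varphi(L)=\omega(T\cdot,\cdot)$ on $L_0$ and $T:L_0\to L_1$ the map whose graph is $L$, extended to all continuous curves by fixed-endpoint homotopy invariance and additivity under concatenation. For $v''=Av$, conjugate instants $t_1$ are those with a nonzero solution satisfying $v(0)=v(t_1)=0$, and $\mu(g,A,T)$ is the Maslov index of the symplectic system with coefficient matrix $\begin{pmatrix}0&g^{-1}\\ gA&0\end{pmatrix}$ (with $g$ viewed as $v\mapsto g(\cdot,v)$). *)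

theory Defs
  imports "HOL-Analysis.Analysis"
begin

text \<open>Model: \<real>^n is real^'n, its dual (\<real>^n)* is also real^'n with pairing
  alpha(v) = alpha \<bullet> v. Linear maps are matrices; the adjoint of a map is its transpose.\<close>

type_synonym 'n sympl = "(real^'n) \<times> (real^'n)"

definition omega :: "'n::finite sympl \<Rightarrow> 'n sympl \<Rightarrow> real" where
  "omega X Y = snd Y \<bullet> fst X - snd X \<bullet> fst Y"

definition lagrangian :: "'n::finite sympl set \<Rightarrow> bool" where
  "lagrangian L \<longleftrightarrow> subspace L \<and> dim L = CARD('n) \<and> (\<forall>x\<in>L. \<forall>y\<in>L. omega x y = 0)"

definition Lzero :: "'n::finite sympl set" where
  "Lzero = {(0, a) | a. True}"

definition transversal :: "'n::finite sympl set \<Rightarrow> 'n sympl set \<Rightarrow> bool" where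
  "transversal L M \<longleftrightarrow> {x + y | x y. x \<in> L \<and> y \<in> M} = UNIV"

text \<open>T : L0 \<rightarrow> L1 whose graph is L, and the form phi(L) = omega(T \<cdot>, \<cdot>) on L0.\<close>
definition graph_map :: "'n::finite sympl set \<Rightarrow> 'n sympl set \<Rightarrow> 'n sympl \<Rightarrow> 'n sympl" where
  "graph_map L1 L x = (THE z. z \<in> L1 \<and> x + z \<in> L)"

definition phi_form :: "'n::finite sympl set \<Rightarrow> 'n sympl set \<Rightarrow> 'n sympl \<Rightarrow> 'n sympl \<Rightarrow> real" where
  "phi_form L1 L x y = omega (graph_map L1 L x) y"

definition n_plus :: "'a::euclidean_space set \<Rightarrow> ('a \<Rightarrow> 'a \<Rightarrow> real) \<Rightarrow> nat" where
  "n_plus S B = Max {dim W | W. subspace W \<and> W \<subseteq> S \<and> (\<forall>w\<in>W. w \<noteq> 0 \<longrightarrow> B w w > 0)}"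

definition chart_index ::
  "'n::finite sympl set \<Rightarrow> 'n sympl set \<Rightarrow> (real \<Rightarrow> 'n sympl set) \<Rightarrow> real \<Rightarrow> real \<Rightarrow> int" where
  "chart_index L0 L1 l a b =
     int (n_plus L0 (phi_form L1 (l b))) + int (dim (l b \<inter> L0))
     - int (n_plus L0 (phi_form L1 (l a))) - int (dim (l a \<inter> L0))"

definition admissible_partition ::
  "'n::finite sympl set \<Rightarrow> (real \<Rightarrow> 'n sympl set) \<Rightarrow> real \<Rightarrow> real
    \<Rightarrow> nat \<Rightarrow> (nat \<Rightarrow> real) \<Rightarrow> (nat \<Rightarrow> 'n sympl set) \<Rightarrow> bool" where
  "admissible_partition L0 l a b k t L1 \<longleftrightarrow>
     k \<ge> 1 \<and> t 0 = a \<and> t k = b \<and> (\<forall>i<k. t i < t (Suc i)) \<and>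
     (\<forall>i<k. lagrangian (L1 i) \<and> transversal L0 (L1 i) \<and>
        (\<forall>s\<in>{t i..t (Suc i)}. transversal (l s) (L1 i)))"

text \<open>Maslov index mu_{L0} of a continuous Lagrangian curve on [a,b]: the common value
  of the chart sums over admissible partitions (the extension by additivity under
  concatenation / fixed-endpoint homotopy invariance).\<close>
definition maslov_index :: "'n::finite sympl set \<Rightarrow> (real \<Rightarrow> 'n sympl set) \<Rightarrow> real \<Rightarrow> real \<Rightarrow> int" where
  "maslov_index L0 l a b = (THE m. \<forall>k t L1. admissible_partition L0 l a b k t L1 \<longrightarrow>
       m = (\<Sum>i<k. chart_index L0 (L1 i) l (t i) (t (Suc i))))"

definition sysmat :: "real^'n^'n \<Rightarrow> real^'n^'n \<Rightarrow> real^'n^'n \<Rightarrow> real^'n^'n \<Rightarrow> 'n::finite sympl \<Rightarrow> 'n sympl" where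
  "sysmat A B C D X = (A *v fst X + B *v snd X, C *v fst X + D *v snd X)"

definition sys_solution :: "('n::finite sympl \<Rightarrow> 'n sympl) \<Rightarrow> (real \<Rightarrow> 'n sympl) \<Rightarrow> bool" where
  "sys_solution Y X \<longleftrightarrow> (\<forall>t. (X has_vector_derivative Y (X t)) (at t))"

definition sys_conjugate_instants :: "('n::finite sympl \<Rightarrow> 'n sympl) \<Rightarrow> real \<Rightarrow> real set" where
  "sys_conjugate_instants Y T = {t0 \<in> {0<..T}. \<exists>X. sys_solution Y X \<and> (\<exists>t. X t \<noteq> 0) \<and>
      fst (X 0) = 0 \<and> fst (X t0) = 0}"

definition flow_image :: "('n::finite sympl \<Rightarrow> 'n sympl) \<Rightarrow> 'n sympl set \<Rightarrow> real \<Rightarrow> 'n sympl set" where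
  "flow_image Y L t = {X t | X. sys_solution Y X \<and> X 0 \<in> L}"

definition sys_maslov :: "('n::finite sympl \<Rightarrow> 'n sympl) \<Rightarrow> real \<Rightarrow> int" where
  "sys_maslov Y T = maslov_index Lzero (flow_image Y Lzero) 0 T"

definition second_order_solution :: "real^'n^'n \<Rightarrow> (real \<Rightarrow> real^'n::finite) \<Rightarrow> bool" where
  "second_order_solution A v \<longleftrightarrow> (\<exists>v'. \<forall>t. (v has_vector_derivative v' t) (at t) \<and>
      (v' has_vector_derivative (A *v v t)) (at t))"

definition second_order_conjugate_instants :: "real^'n^'n \<Rightarrow> real \<Rightarrow> real set" where
  "second_order_conjugate_instants A T = {t1 \<in> {0<..T}. \<exists>v::real \<Rightarrow> real^'n::finite.
      second_order_solution A v \<and> (\<exists>t. v t \<noteq> 0) \<and> v 0 = 0 \<and> v t1 = 0}"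

text \<open>mu(g, A, T): g given by its matrix G (g(u,w) = u \<bullet> G w, and g viewed as
  v \<mapsto> g(\<cdot>, v) is the matrix G); coefficient matrix [[0, g^{-1}], [g A, 0]].\<close>
definition mu_second_order :: "real^'n^'n \<Rightarrow> real^'n^'n \<Rightarrow> real \<Rightarrow> int" where
  "mu_second_order G A T = sys_maslov (sysmat (0::real^'n::finite^'n) (matrix_inv G) (G ** A) 0) T"

end

theory Submission
  imports Defs
begin

lemma inv_facts:
  fixes B :: "real^'n::finite^'n"
  assumes "invertible B"
  shows "B ** matrix_inv B = mat 1" "matrix_inv B ** B = mat 1"
  using someI_ex[OF assms[unfolded invertible_def]] unfolding matrix_inv_def by auto

lemma inv_unique:
  fixes B G H :: "real^'n::finite^'n"
  assumes "B ** G = mat 1" "H ** B = mat 1"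
  shows "H = G"
  by (metis assms matrix_mul_assoc matrix_mul_lid matrix_mul_rid)

lemma inv_inv:
  fixes B :: "real^'n::finite^'n"
  assumes "invertible B"
  shows "matrix_inv (matrix_inv B) = B"
proof -
  have "invertible (matrix_inv B)" using inv_facts[OF assms] unfolding invertible_def by blast
  from inv_facts[OF this] inv_facts[OF assms] show ?thesis
    using inv_unique by metis
qed

lemma inv_sym:
  fixes B :: "real^'n::finite^'n"
  assumes "invertible B" "transpose B = B"
  shows "transpose (matrix_inv B) = matrix_inv B"
proof -
  have "transpose (matrix_inv B) ** B = mat 1"
    by (metis assms(2) inv_facts(1)[OF assms(1)] matrix_transpose_mul transpose_mat)
  then show ?thesis using inv_unique inv_facts[OF assms(1)] by metis
qed

lemma sym_dot:
  fixes M :: "real^'n::finite^'n"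
  assumes "transpose M = M"
  shows "(M *v x) \<bullet> y = x \<bullet> (M *v y)"
  by (metis assms dot_lmul_matrix inner_commute vector_transpose_matrix)

lemma sol_unique:
  fixes Y :: "'n::finite sympl \<Rightarrow> 'n sympl"
  assumes "bounded_linear Y" "sys_solution Y X" "X 0 = 0" "0 \<le> t"
  shows "X t = 0"
proof -
  obtain Kc where Kc: "Kc > 0" "\<And>x. norm (Y x) \<le> norm x * Kc"
    using bounded_linear.pos_bounded[OF assms(1)] by blast
  define h :: "real \<Rightarrow> real" where "h = (\<lambda>u. exp (-2*Kc*u) * (X u \<bullet> X u))"
  have der: "(h has_real_derivative exp(-2*Kc*u) * (2 * (X u \<bullet> Y (X u)) - 2*Kc*(X u \<bullet> X u))) (at u)" for u
  proof -
    have d: "(X has_derivative (\<lambda>r. r *\<^sub>R Y (X u))) (at u)"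
      using assms(2) unfolding sys_solution_def has_vector_derivative_def by blast
    have "((\<lambda>u. X u \<bullet> X u) has_derivative (\<lambda>r. X u \<bullet> (r *\<^sub>R Y (X u)) + (r *\<^sub>R Y (X u)) \<bullet> X u)) (at u)"
      by (rule has_derivative_inner[OF d d])
    moreover have "(\<lambda>r. X u \<bullet> (r *\<^sub>R Y (X u)) + (r *\<^sub>R Y (X u)) \<bullet> X u) = (*) (2 * (X u \<bullet> Y (X u)))"
      by (auto simp: inner_commute algebra_simps)
    ultimately have "((\<lambda>u. X u \<bullet> X u) has_real_derivative 2 * (X u \<bullet> Y (X u))) (at u)"
      unfolding has_field_derivative_def by simp
    then show ?thesis unfolding h_def
      by (auto intro!: derivative_eq_intros simp: algebra_simps)
  qed
  have le: "exp(-2*Kc*u) * (2 * (X u \<bullet> Y (X u)) - 2*Kc*(X u \<bullet> X u)) \<le> 0" for u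
  proof -
    have "X u \<bullet> Y (X u) \<le> norm (X u) * norm (Y (X u))" by (rule norm_cauchy_schwarz)
    also have "\<dots> \<le> norm (X u) * (norm (X u) * Kc)" using Kc(2) by (simp add: mult_left_mono)
    also have "\<dots> = Kc * (X u \<bullet> X u)" by (simp add: power2_norm_eq_inner[symmetric] power2_eq_square)
    finally show ?thesis by (simp add: mult_nonpos_nonneg mult_le_0_iff)
  qed
  have "h t \<le> h 0" using DERIV_nonpos_imp_nonincreasing[of 0 t h] der le assms(4) by blast
  moreover have "h 0 = 0" using assms(3) unfolding h_def by simp
  moreover have "h t \<ge> 0" unfolding h_def by simp
  ultimately have "exp (-2*Kc*t) * (X t \<bullet> X t) \<le> 0" unfolding h_def by simp
  then have "X t \<bullet> X t \<le> 0" by (simp add: mult_le_0_iff)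
  then show ?thesis by (metis inner_eq_zero_iff inner_ge_zero order_antisym)
qed

lemma sol_zero: "linear Y \<Longrightarrow> sys_solution Y (\<lambda>_. 0)"
  unfolding sys_solution_def by (simp add: linear_0)

lemma sol_add: "linear Y \<Longrightarrow> sys_solution Y X1 \<Longrightarrow> sys_solution Y X2 \<Longrightarrow> sys_solution Y (\<lambda>u. X1 u + X2 u)"
  unfolding sys_solution_def by (auto intro!: has_vector_derivative_add simp: linear_add)

lemma sol_scale: "linear Y \<Longrightarrow> sys_solution Y X1 \<Longrightarrow> sys_solution Y (\<lambda>u. c *\<^sub>R X1 u)"
  unfolding sys_solution_def
  by (auto intro!: bounded_linear.has_vector_derivative[OF bounded_linear_scaleR_right] simp: linear_scale)

lemma sol_diff: "linear Y \<Longrightarrow> sys_solution Y X1 \<Longrightarrow> sys_solution Y X2 \<Longrightarrow> sys_solution Y (\<lambda>u. X1 u - X2 u)"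
  unfolding sys_solution_def by (auto intro!: has_vector_derivative_diff simp: linear_diff)

lemma Lzero_eq: "(Lzero :: 'n::finite sympl set) = range (\<lambda>a. (0, a))"
  unfolding Lzero_def by auto

lemma lin_pair0: "linear (\<lambda>a::real^'n::finite. (0::real^'n, a))"
  by (rule linearI) auto

lemma Lzero_subspace: "subspace (Lzero :: 'n::finite sympl set)"
  unfolding Lzero_eq by (rule linear_subspace_image[OF lin_pair0 subspace_UNIV])

lemma Lzero_dim: "dim (Lzero :: 'n::finite sympl set) = CARD('n)"
proof -
  have "dim (Lzero :: 'n::finite sympl set) = dim (UNIV :: (real^'n) set)"
    unfolding Lzero_eq by (rule dim_image_eq[OF lin_pair0]) (auto simp: inj_on_def)
  then show ?thesis by simp
qed

lemma flow_sub_dim: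
  fixes Y :: "'n::finite sympl \<Rightarrow> 'n sympl"
  assumes "bounded_linear Y" "0 \<le> t"
  shows "subspace (flow_image Y Lzero t) \<and> dim (flow_image Y Lzero t) \<le> CARD('n)"
proof -
  have lY: "linear Y" using assms(1) linear_conv_bounded_linear by blast
  define P where "P = {(X 0, X t) | X. sys_solution Y X \<and> X 0 \<in> Lzero}"
  have subP: "subspace P" unfolding subspace_def
  proof (intro conjI ballI allI)
    show "0 \<in> P" unfolding P_def
      apply (rule CollectI, rule exI[where x="\<lambda>_. 0"])
      using sol_zero[OF lY] subspace_0[OF Lzero_subspace] by (simp add: zero_prod_def)
  next
    fix x y assume "x \<in> P" "y \<in> P"
    then obtain X1 X2 where "x = (X1 0, X1 t)" "sys_solution Y X1" "X1 0 \<in> Lzero"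
      "y = (X2 0, X2 t)" "sys_solution Y X2" "X2 0 \<in> Lzero" unfolding P_def by blast
    then show "x + y \<in> P" unfolding P_def
      apply (intro CollectI exI[where x="\<lambda>u. X1 u + X2 u"])
      using sol_add[OF lY] subspace_add[OF Lzero_subspace] by simp
  next
    fix c x assume "x \<in> P"
    then obtain X1 where "x = (X1 0, X1 t)" "sys_solution Y X1" "X1 0 \<in> Lzero"
      unfolding P_def by blast
    then show "c *\<^sub>R x \<in> P" unfolding P_def
      apply (intro CollectI exI[where x="\<lambda>u. c *\<^sub>R X1 u"])
      using sol_scale[OF lY] subspace_scale[OF Lzero_subspace] by simp
  qed
  have fl: "flow_image Y Lzero t = snd ` P" unfolding flow_image_def P_def by force
  have lsnd: "linear (snd :: ('n sympl \<times> 'n sympl) \<Rightarrow> _)"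
    using bounded_linear_snd linear_conv_bounded_linear by blast
  have lfst: "linear (fst :: ('n sympl \<times> 'n sympl) \<Rightarrow> _)"
    using bounded_linear_fst linear_conv_bounded_linear by blast
  have "inj_on fst (span P)"
    unfolding span_eq_iff[THEN iffD2, OF subP]
  proof (rule inj_onI)
    fix x y assume "x \<in> P" "y \<in> P" "fst x = fst y"
    then obtain X1 X2 where "x = (X1 0, X1 t)" "sys_solution Y X1"
      "y = (X2 0, X2 t)" "sys_solution Y X2" "X1 0 = X2 0" unfolding P_def by auto
    moreover have "X1 t - X2 t = 0"
      using sol_unique[OF assms(1) sol_diff[OF lY \<open>sys_solution Y X1\<close> \<open>sys_solution Y X2\<close>] _ assms(2)]
        \<open>X1 0 = X2 0\<close> by simp
    ultimately show "x = y" by simp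
  qed
  then have "dim (fst ` P) = dim P" by (rule dim_image_eq[OF lfst])
  moreover have "fst ` P \<subseteq> Lzero" unfolding P_def by auto
  ultimately have "dim P \<le> CARD('n)" using dim_subset Lzero_dim by metis
  moreover have "dim (snd ` P) \<le> dim P" by (rule dim_image_le[OF lsnd])
  ultimately show ?thesis unfolding fl using linear_subspace_image[OF lsnd subP] by simp
qed

definition symp_iso :: "('n::finite sympl \<Rightarrow> 'n sympl) \<Rightarrow> ('n sympl \<Rightarrow> 'n sympl) \<Rightarrow> bool" where
  "symp_iso P Q \<longleftrightarrow> linear P \<and> linear Q \<and> (\<forall>x. Q (P x) = x) \<and> (\<forall>x. P (Q x) = x)
     \<and> (\<forall>x y. omega (P x) (P y) = omega x y) \<and> (\<forall>x\<in>Lzero. P x = x)"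

lemma symp_iso_sym: "symp_iso P Q \<Longrightarrow> symp_iso Q P"
  unfolding symp_iso_def by metis

lemma iso_image_inv: assumes "symp_iso P Q" shows "Q ` P ` S = S"
proof -
  have "\<And>x. Q (P x) = x" using assms unfolding symp_iso_def by blast
  then show ?thesis by (simp add: image_comp comp_def)
qed

lemma iso_inj: "symp_iso P Q \<Longrightarrow> inj_on P S"
  unfolding symp_iso_def by (metis inj_on_inverseI)

lemma iso_lagr: "symp_iso P Q \<Longrightarrow> lagrangian L \<Longrightarrow> lagrangian (P ` L)"
  unfolding lagrangian_def
proof (intro conjI)
  assume i: "symp_iso P Q" and l: "subspace L \<and> dim L = CARD('a) \<and> (\<forall>x\<in>L. \<forall>y\<in>L. omega x y = 0)"
  show "subspace (P ` L)" using i l linear_subspace_image unfolding symp_iso_def by blast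
  have "dim (P ` L) = dim L"
    by (rule dim_image_eq) (use i iso_inj in \<open>auto simp: symp_iso_def\<close>)
  then show "dim (P ` L) = CARD('a)" using l by simp
  show "\<forall>x\<in>P ` L. \<forall>y\<in>P ` L. omega x y = 0" using i l unfolding symp_iso_def by auto
qed

lemma iso_transv: "symp_iso P Q \<Longrightarrow> transversal L M \<Longrightarrow> transversal (P ` L) (P ` M)"
  unfolding transversal_def
proof -
  assume i: "symp_iso P Q" and t: "{x + y |x y. x \<in> L \<and> y \<in> M} = UNIV"
  have "z \<in> {x + y |x y. x \<in> P ` L \<and> y \<in> P ` M}" for z
  proof -
    obtain x y where "Q z = x + y" "x \<in> L" "y \<in> M" using t by blast
    then have "z = P x + P y" using i unfolding symp_iso_def by (metis linear_add)
    then show ?thesis using \<open>x \<in> L\<close> \<open>y \<in> M\<close> by blast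
  qed
  then show "{x + y |x y. x \<in> P ` L \<and> y \<in> P ` M} = UNIV" by blast
qed

lemma iso_Lzero: "symp_iso P Q \<Longrightarrow> P ` Lzero = Lzero"
  unfolding symp_iso_def by force

lemma adm_transfer:
  assumes "symp_iso P Q" "\<And>s. l2 s = P ` l1 s" "admissible_partition Lzero l1 a b k t L1"
  shows "admissible_partition Lzero l2 a b k t (\<lambda>i. P ` L1 i)"
proof -
  have "transversal Lzero (P ` M)" if "transversal Lzero M" for M
    using iso_transv[OF assms(1) that] iso_Lzero[OF assms(1)] by simp
  moreover have "transversal (l2 s) (P ` M)" if "transversal (l1 s) M" for M s
    using iso_transv[OF assms(1) that] assms(2) by simp
  ultimately show ?thesis using assms(3) iso_lagr[OF assms(1)]
    unfolding admissible_partition_def by blast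
qed

lemma card_sympl: "DIM('n::finite sympl) = 2 * CARD('n)"
  by simp

lemma L_inter:
  fixes L M :: "'n::finite sympl set"
  assumes "subspace L" "dim L \<le> CARD('n)" "lagrangian M" "transversal L M"
  shows "L \<inter> M \<subseteq> {0}"
proof -
  have "dim {x + y |x y. x \<in> L \<and> y \<in> M} + dim (L \<inter> M) = dim L + dim M"
    using dim_sums_Int[OF assms(1)] assms(3) unfolding lagrangian_def by blast
  moreover have "dim {x + y |x y. x \<in> L \<and> y \<in> M} = 2 * CARD('n)"
  proof -
    have "{x + y |x y. x \<in> L \<and> y \<in> M} = UNIV" using assms(4) unfolding transversal_def .
    then show ?thesis using dim_UNIV card_sympl by metis
  qed
  ultimately have "dim (L \<inter> M) = 0" using assms(2,3) unfolding lagrangian_def by linarith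
  then show ?thesis by simp
qed

lemma graph_ex1:
  fixes L M :: "'n::finite sympl set"
  assumes "subspace L" "dim L \<le> CARD('n)" "lagrangian M" "transversal L M"
  shows "\<exists>!z. z \<in> M \<and> x + z \<in> L"
proof -
  have sM: "subspace M" using assms(3) unfolding lagrangian_def by blast
  obtain a b where ab: "x = a + b" "a \<in> L" "b \<in> M" using assms(4) unfolding transversal_def by blast
  have e: "x + -b = a" by (simp add: ab(1))
  have ex1: "-b \<in> M" by (rule subspace_neg[OF sM ab(3)])
  have ex2: "x + -b \<in> L" by (subst e) (rule ab(2))
  have ex: "-b \<in> M \<and> x + -b \<in> L" using ex1 ex2 by (rule conjI)
  have un: "z = -b" if z: "z \<in> M \<and> x + z \<in> L" for z
  proof -
    have m: "z - (-b) \<in> M" using subspace_diff[OF sM conjunct1[OF z] ex1] .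
    have l1: "(x + z) - (x + -b) \<in> L" using subspace_diff[OF assms(1) conjunct2[OF z] ex2] .
    have "(x + z) - (x + -b) = z - (-b)" by (simp add: algebra_simps)
    then have "z - (-b) \<in> L \<inter> M" using l1 m by simp
    then have "z - (-b) = 0" using L_inter[OF assms] by blast
    then show "z = -b" by (simp only: right_minus_eq)
  qed
  show ?thesis using ex un by blast
qed
lemma graph_transfer:
  fixes L M :: "'n::finite sympl set"
  assumes i: "symp_iso P Q" and "subspace L" "dim L \<le> CARD('n)" "lagrangian M" "transversal L M"
  shows "graph_map (P ` M) (P ` L) (P x) = P (graph_map M L x)"
proof -
  note ex = graph_ex1[OF assms(2-5), of x]
  define g where "g = graph_map M L x"
  have g: "g \<in> M \<and> x + g \<in> L" unfolding g_def graph_map_def by (rule theI'[OF ex])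
  have lP: "linear P" and lQ: "linear Q" and QP: "\<And>x. Q (P x) = x" and PQ: "\<And>x. P (Q x) = x"
    using i unfolding symp_iso_def by auto
  have "graph_map (P ` M) (P ` L) (P x) = P g" unfolding graph_map_def
  proof (rule the_equality)
    show "P g \<in> P ` M \<and> P x + P g \<in> P ` L" using g lP by (metis image_eqI linear_add)
  next
    fix z assume z: "z \<in> P ` M \<and> P x + z \<in> P ` L"
    have "Q z \<in> M" using z QP by auto
    moreover have "x + Q z \<in> L"
    proof -
      obtain w where "w \<in> L" "P x + z = P w" using z by auto
      then have "Q (P x + z) = w" using QP by simp
      then show ?thesis using lQ QP \<open>w \<in> L\<close> by (metis linear_add)
    qed
    ultimately have "Q z = g" using ex g by blast
    then show "z = P g" using PQ by metis
  qed
  then show ?thesis by (simp add: g_def)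
qed

lemma n_plus_cong:
  assumes "\<And>x y. x \<in> S \<Longrightarrow> y \<in> S \<Longrightarrow> B x y = B' x y"
  shows "n_plus S B = n_plus S B'"
proof -
  have *: "(\<forall>w\<in>W. w \<noteq> 0 \<longrightarrow> B w w > 0) = (\<forall>w\<in>W. w \<noteq> 0 \<longrightarrow> B' w w > 0)" if "W \<subseteq> S" for W
  proof -
    have "\<forall>w\<in>W. B w w = B' w w" using that assms by blast
    then show ?thesis by simp
  qed
  have "{dim W | W. subspace W \<and> W \<subseteq> S \<and> (\<forall>w\<in>W. w \<noteq> 0 \<longrightarrow> B w w > 0)} =
        {dim W | W. subspace W \<and> W \<subseteq> S \<and> (\<forall>w\<in>W. w \<noteq> 0 \<longrightarrow> B' w w > 0)}"
    using * by blast
  then show ?thesis unfolding n_plus_def by simp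
qed

lemma chart_part_transfer:
  fixes L M :: "'n::finite sympl set"
  assumes i: "symp_iso P Q" and "subspace L" "dim L \<le> CARD('n)" "lagrangian M" "transversal L M"
  shows "n_plus Lzero (phi_form (P ` M) (P ` L)) = n_plus Lzero (phi_form M L)"
    and "dim (P ` L \<inter> Lzero) = dim (L \<inter> Lzero)"
proof -
  have fix0: "\<And>x. x \<in> Lzero \<Longrightarrow> P x = x" using i unfolding symp_iso_def by auto
  have om: "\<And>x y. omega (P x) (P y) = omega x y" using i unfolding symp_iso_def by auto
  show "n_plus Lzero (phi_form (P ` M) (P ` L)) = n_plus Lzero (phi_form M L)"
  proof (rule n_plus_cong)
    fix x y :: "'n sympl" assume "x \<in> Lzero" "y \<in> Lzero"
    have "graph_map (P ` M) (P ` L) x = P (graph_map M L x)"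
      using graph_transfer[OF assms, of x] fix0[OF \<open>x \<in> Lzero\<close>] by simp
    moreover have "omega (P (graph_map M L x)) y = omega (P (graph_map M L x)) (P y)"
      using fix0[OF \<open>y \<in> Lzero\<close>] by simp
    ultimately show "phi_form (P ` M) (P ` L) x y = phi_form M L x y"
      unfolding phi_form_def using om by simp
  qed
  have "P ` L \<inter> Lzero = P ` (L \<inter> Lzero)"
    using iso_Lzero[OF i] image_Int[OF iso_inj[OF i, of UNIV]] by simp
  also have "dim \<dots> = dim (L \<inter> Lzero)"
    by (rule dim_image_eq) (use i iso_inj in \<open>auto simp: symp_iso_def\<close>)
  finally show "dim (P ` L \<inter> Lzero) = dim (L \<inter> Lzero)" .
qed

lemma maslov_transfer:
  fixes l1 l2 :: "real \<Rightarrow> 'n::finite sympl set"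
  assumes i: "symp_iso P Q" and l2: "\<And>s. l2 s = P ` l1 s"
    and sd: "\<And>s. a \<le> s \<Longrightarrow> subspace (l1 s) \<and> dim (l1 s) \<le> CARD('n)"
  shows "maslov_index Lzero l2 a b = maslov_index Lzero l1 a b"
proof -
  have l1: "\<And>s. l1 s = Q ` l2 s" using l2 iso_image_inv[OF i] by simp
  have i2: "symp_iso Q P" by (rule symp_iso_sym[OF i])
  have sum_eq: "(\<Sum>i<k. chart_index Lzero (P ` L1 i) l2 (t i) (t (Suc i)))
      = (\<Sum>i<k. chart_index Lzero (L1 i) l1 (t i) (t (Suc i)))"
    if adm: "admissible_partition Lzero l1 a b k t L1" for k t L1
  proof (rule sum.cong[OF refl])
    fix i assume ik: "i \<in> {..<k}"
    have mono: "a \<le> t j" if "j \<le> k" for j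
      using that
    proof (induction j)
      case 0
      then show ?case using adm unfolding admissible_partition_def by simp
    next
      case (Suc j)
      then have "t j < t (Suc j)" using adm unfolding admissible_partition_def by simp
      then show ?case using Suc by simp
    qed
    have ltt: "t i < t (Suc i)" using adm ik unfolding admissible_partition_def by simp
    have lag: "lagrangian (L1 i)" using adm ik unfolding admissible_partition_def by simp
    have tr: "\<forall>s\<in>{t i..t (Suc i)}. transversal (l1 s) (L1 i)"
      using adm ik unfolding admissible_partition_def by simp
    have tra: "transversal (l1 (t i)) (L1 i)" and trb: "transversal (l1 (t (Suc i))) (L1 i)"
      using tr ltt by auto
    have sa: "subspace (l1 (t i)) \<and> dim (l1 (t i)) \<le> CARD('n)"
      using sd mono ik by simp
    have sb: "subspace (l1 (t (Suc i))) \<and> dim (l1 (t (Suc i))) \<le> CARD('n)"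
      using sd mono ik by simp
    note A = chart_part_transfer[OF i conjunct1[OF sa] conjunct2[OF sa] lag tra]
    note B = chart_part_transfer[OF i conjunct1[OF sb] conjunct2[OF sb] lag trb]
    show "chart_index Lzero (P ` L1 i) l2 (t i) (t (Suc i)) = chart_index Lzero (L1 i) l1 (t i) (t (Suc i))"
      unfolding chart_index_def l2 A B ..
  qed
  show ?thesis unfolding maslov_index_def
  proof (rule arg_cong[where f=The], rule ext, rule iffI)
    fix m assume H: "\<forall>k t L1. admissible_partition Lzero l2 a b k t L1 \<longrightarrow>
        m = (\<Sum>i<k. chart_index Lzero (L1 i) l2 (t i) (t (Suc i)))"
    show "\<forall>k t L1. admissible_partition Lzero l1 a b k t L1 \<longrightarrow>
        m = (\<Sum>i<k. chart_index Lzero (L1 i) l1 (t i) (t (Suc i)))"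
    proof (intro allI impI)
      fix k t L1 assume adm: "admissible_partition Lzero l1 a b k t L1"
      have "m = (\<Sum>i<k. chart_index Lzero (P ` L1 i) l2 (t i) (t (Suc i)))"
        using H adm_transfer[OF i l2 adm] by blast
      then show "m = (\<Sum>i<k. chart_index Lzero (L1 i) l1 (t i) (t (Suc i)))"
        using sum_eq[OF adm] by simp
    qed
  next
    fix m assume H: "\<forall>k t L1. admissible_partition Lzero l1 a b k t L1 \<longrightarrow>
        m = (\<Sum>i<k. chart_index Lzero (L1 i) l1 (t i) (t (Suc i)))"
    show "\<forall>k t L1. admissible_partition Lzero l2 a b k t L1 \<longrightarrow>
        m = (\<Sum>i<k. chart_index Lzero (L1 i) l2 (t i) (t (Suc i)))"
    proof (intro allI impI)
      fix k t L1 assume adm: "admissible_partition Lzero l2 a b k t L1"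
      have adm1: "admissible_partition Lzero l1 a b k t (\<lambda>i. Q ` L1 i)"
        by (rule adm_transfer[OF i2 l1 adm])
      have "m = (\<Sum>i<k. chart_index Lzero (Q ` L1 i) l1 (t i) (t (Suc i)))"
        using H adm1 by blast
      also have "\<dots> = (\<Sum>i<k. chart_index Lzero (P ` Q ` L1 i) l2 (t i) (t (Suc i)))"
        using sum_eq[OF adm1] by simp
      also have "\<dots> = (\<Sum>i<k. chart_index Lzero (L1 i) l2 (t i) (t (Suc i)))"
        using iso_image_inv[OF i2] by simp
      finally show "m = (\<Sum>i<k. chart_index Lzero (L1 i) l2 (t i) (t (Suc i)))" .
    qed
  qed
qed

lemma neg_mv: "(- A) *v x = - (A *v (x::real^'n::finite))"
proof -
  have "(- A + A) *v x = 0" by simp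
  then show ?thesis unfolding matrix_vector_mult_add_rdistrib by (simp add: eq_neg_iff_add_eq_0)
qed

lemma sysmat_linear: "linear (sysmat A B C D)"
  by (rule linearI) (auto simp: sysmat_def matrix_vector_right_distrib matrix_vector_mult_scaleR scaleR_add_right)

lemma sysmat_bl: "bounded_linear (sysmat A B C D)"
  using sysmat_linear linear_conv_bounded_linear by blast

lemma sol_map:
  assumes "linear P" "\<And>x. P (Y1 x) = Y2 (P x)" "sys_solution Y1 X"
  shows "sys_solution Y2 (\<lambda>t. P (X t))"
  using assms bounded_linear.has_vector_derivative[of P] linear_conv_bounded_linear
  unfolding sys_solution_def by metis

definition psi :: "real^'n^'n \<Rightarrow> 'n::finite sympl \<Rightarrow> 'n sympl" where
  "psi M X = (fst X, snd X + M *v fst X)"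

definition psi' :: "real^'n^'n \<Rightarrow> 'n::finite sympl \<Rightarrow> 'n sympl" where
  "psi' M X = (fst X, snd X - M *v fst X)"

lemma psi_iso:
  assumes "transpose M = M"
  shows "symp_iso (psi M) (psi' M)"
  unfolding symp_iso_def
proof (intro conjI allI ballI)
  show "linear (psi M)"
    by (rule linearI) (auto simp: psi_def matrix_vector_right_distrib matrix_vector_mult_scaleR algebra_simps)
  show "linear (psi' M)"
    by (rule linearI) (auto simp: psi'_def matrix_vector_right_distrib matrix_vector_mult_scaleR algebra_simps)
  fix x y :: "'a sympl"
  show "psi' M (psi M x) = x" by (simp add: psi_def psi'_def)
  show "psi M (psi' M x) = x" by (simp add: psi_def psi'_def)
  have "(M *v fst y) \<bullet> fst x = (M *v fst x) \<bullet> fst y"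
    using sym_dot[OF assms] by (metis inner_commute)
  then show "omega (psi M x) (psi M y) = omega x y"
    unfolding omega_def psi_def by (simp add: inner_add_left)
next
  fix x :: "'a sympl" assume "x \<in> Lzero"
  then show "psi M x = x" unfolding Lzero_def psi_def by auto
qed

lemma flow_map:
  assumes i: "symp_iso P Q" and PY: "\<And>x. P (Y1 x) = Y2 (P x)"
  shows "flow_image Y2 Lzero t = P ` flow_image Y1 Lzero t"
proof -
  have lP: "linear P" and lQ: "linear Q" and QP: "\<And>x. Q (P x) = x" and PQ: "\<And>x. P (Q x) = x"
    and fx: "\<And>x. x \<in> Lzero \<Longrightarrow> P x = x"
    using i unfolding symp_iso_def by auto
  have QY: "Q (Y2 x) = Y1 (Q x)" for x
    by (metis PY QP PQ)
  have fxQ: "\<And>x. x \<in> Lzero \<Longrightarrow> Q x = x" by (metis QP fx)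
  show ?thesis
  proof
    show "flow_image Y2 Lzero t \<subseteq> P ` flow_image Y1 Lzero t"
    proof
      fix z assume "z \<in> flow_image Y2 Lzero t"
      then obtain Z where Z: "z = Z t" "sys_solution Y2 Z" "Z 0 \<in> Lzero" unfolding flow_image_def by blast
      have "sys_solution Y1 (\<lambda>t. Q (Z t))" by (rule sol_map[OF lQ QY Z(2)])
      moreover have "Q (Z 0) \<in> Lzero" using fxQ Z(3) by simp
      ultimately have "Q (Z t) \<in> flow_image Y1 Lzero t" unfolding flow_image_def
        by (intro CollectI exI[where x="\<lambda>t. Q (Z t)"]) simp
      then show "z \<in> P ` flow_image Y1 Lzero t" using PQ Z(1) by (metis image_eqI)
    qed
    show "P ` flow_image Y1 Lzero t \<subseteq> flow_image Y2 Lzero t"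
    proof
      fix z assume "z \<in> P ` flow_image Y1 Lzero t"
      then obtain X where X: "z = P (X t)" "sys_solution Y1 X" "X 0 \<in> Lzero" unfolding flow_image_def by blast
      have "sys_solution Y2 (\<lambda>t. P (X t))" by (rule sol_map[OF lP PY X(2)])
      moreover have "P (X 0) \<in> Lzero" using fx X(3) by simp
      ultimately show "z \<in> flow_image Y2 Lzero t" unfolding flow_image_def X(1)
        by (intro CollectI exI[where x="\<lambda>t. P (X t)"]) simp
    qed
  qed
qed

lemma conj_map:
  assumes i: "symp_iso P Q" and PY: "\<And>x. P (Y1 x) = Y2 (P x)" and fP: "\<And>x. fst (P x) = fst x"
  shows "sys_conjugate_instants Y1 T \<subseteq> sys_conjugate_instants Y2 T"
proof
  have lP: "linear P" and lQ: "linear Q" and QP: "\<And>x. Q (P x) = x"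
    using i unfolding symp_iso_def by auto
  fix t0 assume "t0 \<in> sys_conjugate_instants Y1 T"
  then obtain X t where X: "t0 \<in> {0<..T}" "sys_solution Y1 X" "X t \<noteq> 0" "fst (X 0) = 0" "fst (X t0) = 0"
    unfolding sys_conjugate_instants_def by blast
  have "sys_solution Y2 (\<lambda>t. P (X t))" by (rule sol_map[OF lP PY X(2)])
  moreover have "P (X t) \<noteq> 0" using X(3) QP linear_0[OF lQ] by metis
  ultimately show "t0 \<in> sys_conjugate_instants Y2 T"
    unfolding sys_conjugate_instants_def using X fP
    by (intro CollectI conjI exI[where x="\<lambda>t. P (X t)"]) auto
qed

lemma so_conj:
  fixes B A :: "real^'n::finite^'n"
  assumes inv: "invertible B"
  shows "sys_conjugate_instants (sysmat 0 B (matrix_inv B ** A) 0) T = second_order_conjugate_instants A T"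
proof -
  define Bi where "Bi = matrix_inv B"
  have BBi: "B ** Bi = mat 1" and BiB: "Bi ** B = mat 1" using inv_facts[OF inv] unfolding Bi_def by auto
  have Y2: "sysmat 0 B (Bi ** A) 0 X = (B *v snd X, (Bi ** A) *v fst X)" for X
    unfolding sysmat_def by simp
  have lw: "bounded_linear (\<lambda>p::'n sympl. B *v snd p)"
    unfolding linear_conv_bounded_linear[symmetric]
    by (rule linearI) (auto simp: matrix_vector_right_distrib matrix_vector_mult_scaleR)
  have lBi: "bounded_linear (\<lambda>x::real^'n. Bi *v x)"
    unfolding linear_conv_bounded_linear[symmetric]
    by (rule linearI) (auto simp: matrix_vector_right_distrib matrix_vector_mult_scaleR)
  show ?thesis unfolding Bi_def[symmetric]
  proof
    show "sys_conjugate_instants (sysmat 0 B (Bi ** A) 0) T \<subseteq> second_order_conjugate_instants A T"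
    proof
      fix t0 assume "t0 \<in> sys_conjugate_instants (sysmat 0 B (Bi ** A) 0) T"
      then obtain Z t where Z: "t0 \<in> {0<..T}" "sys_solution (sysmat 0 B (Bi ** A) 0) Z" "Z t \<noteq> 0"
        "fst (Z 0) = 0" "fst (Z t0) = 0"
        unfolding sys_conjugate_instants_def by blast
      have dZ: "(Z has_vector_derivative (B *v snd (Z s), (Bi ** A) *v fst (Z s))) (at s)" for s
        using Z(2) unfolding sys_solution_def Y2 by blast
      have dv: "((\<lambda>s. fst (Z s)) has_vector_derivative B *v snd (Z s)) (at s)" for s
        using bounded_linear.has_vector_derivative[OF bounded_linear_fst dZ[of s]] by simp
      have dw: "((\<lambda>s. B *v snd (Z s)) has_vector_derivative A *v fst (Z s)) (at s)" for s
      proof -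
        have "((\<lambda>s. B *v snd (Z s)) has_vector_derivative B *v ((Bi ** A) *v fst (Z s))) (at s)"
          using bounded_linear.has_vector_derivative[OF lw dZ[of s]] by simp
        moreover have "B *v ((Bi ** A) *v fst (Z s)) = A *v fst (Z s)"
        proof -
          have "B ** (Bi ** A) = A" by (simp add: matrix_mul_assoc BBi)
          then show ?thesis by (simp add: matrix_vector_mul_assoc)
        qed
        ultimately show ?thesis by simp
      qed
      have sol: "second_order_solution A (\<lambda>s. fst (Z s))"
        unfolding second_order_solution_def using dv dw
        by (intro exI[where x="\<lambda>s. B *v snd (Z s)"]) simp
      have nz: "\<exists>s. fst (Z s) \<noteq> 0"
      proof (rule ccontr)
        assume "\<not> (\<exists>s. fst (Z s) \<noteq> 0)"
        then have v0: "(\<lambda>s. fst (Z s)) = (\<lambda>s. 0)" by auto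
        have "B *v snd (Z t) = 0"
          using vector_derivative_unique_at[OF dv[of t]] v0 has_vector_derivative_const[of "0::real^'n" "at t"]
          by simp
        then have "Bi *v (B *v snd (Z t)) = 0" by simp
        then have "snd (Z t) = 0" by (simp add: matrix_vector_mul_assoc BiB)
        moreover have "fst (Z t) = 0" using v0 by meson
        ultimately have "Z t = 0" by (simp add: prod_eq_iff)
        then show False using Z(3) by simp
      qed
      show "t0 \<in> second_order_conjugate_instants A T"
        unfolding second_order_conjugate_instants_def using Z(1,4,5) sol nz
        by (intro CollectI conjI exI[where x="\<lambda>s. fst (Z s)"]) auto
    qed
    show "second_order_conjugate_instants A T \<subseteq> sys_conjugate_instants (sysmat 0 B (Bi ** A) 0) T"
    proof
      fix t0 assume "t0 \<in> second_order_conjugate_instants A T"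
      then obtain v t where v: "t0 \<in> {0<..T}" "second_order_solution A v" "v t \<noteq> 0" "v 0 = 0" "v t0 = 0"
        unfolding second_order_conjugate_instants_def by blast
      then obtain v' where dv: "\<And>s. (v has_vector_derivative v' s) (at s)"
        and dv': "\<And>s. (v' has_vector_derivative (A *v v s)) (at s)"
        unfolding second_order_solution_def by blast
      have sol: "sys_solution (sysmat 0 B (Bi ** A) 0) (\<lambda>s. (v s, Bi *v v' s))"
        unfolding sys_solution_def Y2
      proof
        fix s
        have "((\<lambda>s. (v s, Bi *v v' s)) has_vector_derivative (v' s, Bi *v (A *v v s))) (at s)"
          by (rule has_vector_derivative_Pair[OF dv bounded_linear.has_vector_derivative[OF lBi dv']])
        moreover have "B *v snd (v s, Bi *v v' s) = v' s"
          by (simp add: matrix_vector_mul_assoc BBi)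
        moreover have "(Bi ** A) *v fst (v s, Bi *v v' s) = Bi *v (A *v v s)"
          by (simp add: matrix_vector_mul_assoc)
        ultimately show "((\<lambda>s. (v s, Bi *v v' s)) has_vector_derivative
            (B *v snd (v s, Bi *v v' s), (Bi ** A) *v fst (v s, Bi *v v' s))) (at s)" by simp
      qed
      show "t0 \<in> sys_conjugate_instants (sysmat 0 B (Bi ** A) 0) T"
        unfolding sys_conjugate_instants_def using v(1,4,5) sol
        apply (intro CollectI conjI exI[where x="\<lambda>s. (v s, Bi *v v' s)"])
        using v(3) by (auto simp: zero_prod_def intro!: exI[where x=t])
    qed
  qed
qed

theorem corollary5p8:
  fixes AA BB CC :: "real^'n::finite^'n"
  assumes "transpose BB = BB" and "transpose CC = CC"
    and "invertible BB"
    and "matrix_inv BB ** AA = transpose AA ** matrix_inv BB"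
  shows "\<forall>T>0.
      sys_conjugate_instants (sysmat AA BB CC (- transpose AA)) T
        = second_order_conjugate_instants (BB ** (transpose AA ** matrix_inv BB ** AA + CC)) T
    \<and> sys_maslov (sysmat AA BB CC (- transpose AA)) T
        = mu_second_order (matrix_inv BB) (BB ** (transpose AA ** matrix_inv BB ** AA + CC)) T"
proof (intro allI impI)
  fix T :: real assume "T > 0"
  define G where "G = matrix_inv BB"
  define M where "M = G ** AA"
  define An where "An = BB ** (transpose AA ** G ** AA + CC)"
  define Y1 where "Y1 = sysmat AA BB CC (- transpose AA)"
  define Y2 where "Y2 = sysmat 0 BB (G ** An) 0"
  have BG: "BB ** G = mat 1" and GB: "G ** BB = mat 1" using inv_facts[OF assms(3)] unfolding G_def by auto
  have Gs: "transpose G = G" unfolding G_def by (rule inv_sym[OF assms(3,1)])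
  have sym4: "G ** AA = transpose AA ** G" using assms(4) unfolding G_def .
  have Ms: "transpose M = M" unfolding M_def by (simp add: matrix_transpose_mul Gs sym4)
  have e1: "BB ** M = AA" unfolding M_def by (simp add: matrix_mul_assoc BG)
  have e2: "M ** AA = transpose AA ** G ** AA" unfolding M_def sym4 ..
  have e3: "M ** BB = transpose AA" unfolding M_def sym4 by (simp add: matrix_mul_assoc[symmetric] GB)
  have e4: "G ** An = transpose AA ** G ** AA + CC" unfolding An_def by (simp add: matrix_mul_assoc GB)
  have PY: "psi M (Y1 x) = Y2 (psi M x)" for x
  proof -
    obtain v a where x: "x = (v, a)" by (cases x)
    have f: "AA *v v + BB *v a = BB *v (a + M *v v)"
      by (simp add: matrix_vector_right_distrib matrix_vector_mul_assoc e1)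
    have s: "CC *v v + (- transpose AA) *v a + M *v (AA *v v + BB *v a) = (G ** An) *v v"
      by (simp add: matrix_vector_right_distrib matrix_vector_mul_assoc e2 e3 e4
          matrix_vector_mult_add_rdistrib neg_mv)
    show ?thesis unfolding x psi_def Y1_def Y2_def sysmat_def using f s by simp
  qed
  have iso: "symp_iso (psi M) (psi' M)" by (rule psi_iso[OF Ms])
  have iso': "symp_iso (psi' M) (psi M)" by (rule symp_iso_sym[OF iso])
  have QY: "psi' M (Y2 x) = Y1 (psi' M x)" for x
    using iso PY unfolding symp_iso_def by metis
  have conj: "sys_conjugate_instants Y1 T = sys_conjugate_instants Y2 T"
  proof -
    have f1: "fst (psi M x) = fst x" for x by (simp add: psi_def)
    have f2: "fst (psi' M x) = fst x" for x by (simp add: psi'_def)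
    show ?thesis
      using conj_map[where ?Y1.0=Y1 and ?Y2.0=Y2, OF iso PY f1] conj_map[where ?Y1.0=Y2 and ?Y2.0=Y1, OF iso' QY f2] by blast
  qed
  have so: "sys_conjugate_instants Y2 T = second_order_conjugate_instants An T"
    unfolding Y2_def G_def by (rule so_conj[OF assms(3)])
  have mas: "sys_maslov Y2 T = sys_maslov Y1 T"
    unfolding sys_maslov_def
  proof (rule maslov_transfer[OF iso])
    show "flow_image Y2 Lzero s = psi M ` flow_image Y1 Lzero s" for s
      by (rule flow_map[where ?Y1.0=Y1 and ?Y2.0=Y2, OF iso PY])
    show "0 \<le> s \<Longrightarrow> subspace (flow_image Y1 Lzero s) \<and> dim (flow_image Y1 Lzero s) \<le> CARD('n)" for s
      unfolding Y1_def by (rule flow_sub_dim[OF sysmat_bl])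
  qed
  have mu: "mu_second_order G An T = sys_maslov Y2 T"
    unfolding mu_second_order_def Y2_def inv_inv[OF assms(3), folded G_def] ..
  show "sys_conjugate_instants (sysmat AA BB CC (- transpose AA)) T
        = second_order_conjugate_instants (BB ** (transpose AA ** matrix_inv BB ** AA + CC)) T
    \<and> sys_maslov (sysmat AA BB CC (- transpose AA)) T
        = mu_second_order (matrix_inv BB) (BB ** (transpose AA ** matrix_inv BB ** AA + CC)) T"
    using conj so mas mu unfolding Y1_def An_def G_def by simp
qed

end
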